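(* Fix $1\ge \rho_+>\rho_-\ge 0$. There exist constants $c<\infty$ and $b>0$, independent of $N$, such that for every positive integer $N$, every probability measure $\mu_N$ on $\{0,1\}^{[-N,N]}$ and every $t>0$, $$\|\mu_N S_t-\mu^{\rm st}_N\|\le c\,N\,e^{-bN^{-2}t}.$$
   Context: For a positive integer $N$, consider the continuous-time Markov process on $\{0,1\}^{[-N,N]}$ (with $[-N,N]$ the integers from $-N$ to $N$) with generator $L=L_0+L'$, where for $f:\{0,1\}^{[-N,N]}\to\mathbb R$, $$L_0 f(\eta)=\frac12\sum_{x=-N}^{N-1}[f(\eta^{(x,x+1)})-f(\eta)],$$ $\eta^{(x,x+1)}$ being $\eta$ with the values at $x$ and $x+1$ exchanged, and $$L'f(\eta)=\rho_+[f(\eta^{(+,N)})-f(\eta)]+(1-\rho_+)[f(\eta^{(-,N)})-f(\eta)]+\rho_-[f(\eta^{(+,-N)})-f(\eta)]+(1-\rho_-)[f(\eta^{(-,-N)})-f(\eta)],$$ where $\eta^{(+,x)}$ (resp. $\eta^{(-,x)}$) equals $\eta$ except that its value at $x$ is set to $1$ (resp. $0$). This process has a unique stationary probability measure $\mu^{\rm st}_N$. For a probability measure $\mu_N$, $\mu_NS_t$ denotes the law at time $t$ of the process started with law $\mu_N$. For a signed measure $\lambda$ on $\{0,1\}^{[-N,N]}$, $\|\lambda\|=\sum_\eta|\lambda(\eta)|$. *)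

theory Defs
  imports "HOL-Analysis.Analysis"
begin

text \<open>Configurations: elements of {0,1}^[-N,N], represented as functions
  int => bool that are False (i.e. 0) outside [-N,N].\<close>
type_synonym config = "int \<Rightarrow> bool"

definition configs :: "nat \<Rightarrow> config set" where
  "configs N = {\<eta>. \<forall>x. x \<notin> {- int N .. int N} \<longrightarrow> \<not> \<eta> x}"

definition swp :: "int \<Rightarrow> config \<Rightarrow> config" where
  "swp x \<eta> = \<eta>(x := \<eta> (x + 1), x + 1 := \<eta> x)"

definition gen :: "nat \<Rightarrow> real \<Rightarrow> real \<Rightarrow> (config \<Rightarrow> real) \<Rightarrow> config \<Rightarrow> real" where
  "gen N rp rm f \<eta> =
     (1/2) * (\<Sum>x\<in>{- int N .. int N - 1}. f (swp x \<eta>) - f \<eta>)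
     + rp * (f (\<eta>(int N := True)) - f \<eta>)
     + (1 - rp) * (f (\<eta>(int N := False)) - f \<eta>)
     + rm * (f (\<eta>(- int N := True)) - f \<eta>)
     + (1 - rm) * (f (\<eta>(- int N := False)) - f \<eta>)"

definition semigroup :: "nat \<Rightarrow> real \<Rightarrow> real \<Rightarrow> real \<Rightarrow> (config \<Rightarrow> real) \<Rightarrow> config \<Rightarrow> real" where
  "semigroup N rp rm t f \<eta> = (\<Sum>n. t ^ n / fact n * ((gen N rp rm ^^ n) f) \<eta>)"

definition law :: "nat \<Rightarrow> real \<Rightarrow> real \<Rightarrow> (config \<Rightarrow> real) \<Rightarrow> real \<Rightarrow> config \<Rightarrow> real" where
  "law N rp rm \<mu> t \<zeta> =
     (\<Sum>\<eta>\<in>configs N. \<mu> \<eta> * semigroup N rp rm t (\<lambda>\<xi>. if \<xi> = \<zeta> then 1 else 0) \<eta>)"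

definition prob_on :: "nat \<Rightarrow> (config \<Rightarrow> real) \<Rightarrow> bool" where
  "prob_on N \<mu> \<longleftrightarrow> (\<forall>\<eta>. \<eta> \<notin> configs N \<longrightarrow> \<mu> \<eta> = 0) \<and> (\<forall>\<eta>\<in>configs N. 0 \<le> \<mu> \<eta>)
      \<and> (\<Sum>\<eta>\<in>configs N. \<mu> \<eta>) = 1"

definition stat :: "nat \<Rightarrow> real \<Rightarrow> real \<Rightarrow> config \<Rightarrow> real" where
  "stat N rp rm = (THE \<mu>. prob_on N \<mu> \<and> (\<forall>t\<ge>0. \<forall>\<zeta>\<in>configs N. law N rp rm \<mu> t \<zeta> = \<mu> \<zeta>))"

definition tvnorm :: "nat \<Rightarrow> (config \<Rightarrow> real) \<Rightarrow> real" where
  "tvnorm N m = (\<Sum>\<eta>\<in>configs N. \<bar>m \<eta>\<bar>)"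

end

theory Submission imports Defs begin

lemma pascal:
  fixes u :: "nat \<Rightarrow> real"
  shows "(\<Sum>k\<le>Suc n. real (Suc n choose k) * (-1)^(Suc n - k) * u k)
     = (\<Sum>k\<le>n. real (n choose k) * (-1)^(n-k) * u (Suc k)) - (\<Sum>k\<le>n. real (n choose k) * (-1)^(n-k) * u k)"
proof -
  have "(\<Sum>k\<le>Suc n. real (Suc n choose k) * (-1)^(Suc n - k) * u k)
     = (-1)^(Suc n) * u 0 + (\<Sum>j\<le>n. real (Suc n choose Suc j) * (-1)^(n - j) * u (Suc j))"
    by (subst sum.atMost_Suc_shift) simp
  also have "(\<Sum>j\<le>n. real (Suc n choose Suc j) * (-1)^(n - j) * u (Suc j))
     = (\<Sum>j\<le>n. real (n choose j) * (-1)^(n - j) * u (Suc j)) + (\<Sum>j\<le>n. real (n choose Suc j) * (-1)^(n - j) * u (Suc j))"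
    by (simp add: sum.distrib[symmetric] ring_distribs)
  also have "(\<Sum>j\<le>n. real (n choose Suc j) * (-1)^(n - j) * u (Suc j)) = (\<Sum>j<n. real (n choose Suc j) * (-1)^(n - j) * u (Suc j))"
    by (simp add: lessThan_Suc_atMost[symmetric])
  also have "\<dots> = - (\<Sum>j<n. real (n choose Suc j) * (-1)^(n - Suc j) * u (Suc j))"
  proof -
    have "\<And>x. x < n \<Longrightarrow> (-1::real)^(n - x) = - ((-1)^(n - Suc x))"
    proof -
      fix x assume "x < n" then have "n - x = Suc (n - Suc x)" by simp
      then show "(-1::real)^(n - x) = - ((-1)^(n - Suc x))" by simp
    qed
    then show ?thesis by (auto simp add: sum_negf[symmetric] intro!: sum.cong)
  qed
  also have "(\<Sum>k\<le>n. real (n choose k) * (-1)^(n-k) * u k) = (-1)^n * u 0 + (\<Sum>j<n. real (n choose Suc j) * (-1)^(n - Suc j) * u (Suc j))"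
  proof (cases n)
    case 0 then show ?thesis by simp
  next
    case (Suc m) then show ?thesis by (simp only: Suc sum.atMost_Suc_shift lessThan_Suc_atMost) simp
  qed
  ultimately show ?thesis by simp
qed

context
  fixes N :: nat and rp rm :: real
  assumes Npos: "N > 0" and rp1: "rp \<le> 1" and rmrp: "rm < rp" and rm0: "0 \<le> rm"
begin

definition RR :: real where "RR = real N + 2"

definition Pop :: "(config \<Rightarrow> real) \<Rightarrow> config \<Rightarrow> real" where
 "Pop g \<eta> = (1/RR) * ((1/2) * (\<Sum>x\<in>{- int N .. int N - 1}. g (swp x \<eta>))
     + rp * g (\<eta>(int N := True)) + (1-rp) * g (\<eta>(int N := False))
     + rm * g (\<eta>(- int N := True)) + (1-rm) * g (\<eta>(- int N := False)))"

lemma RR_pos: "RR > 0" unfolding RR_def by simp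

lemma card_edges: "card {- int N .. int N - 1} = 2 * N" by simp

lemma gen_Pop: "gen N rp rm g \<eta> = RR * (Pop g \<eta> - g \<eta>)"
proof -
  have h: "(\<Sum>x\<in>{- int N .. int N - 1}. g (swp x \<eta>) - g \<eta>) = (\<Sum>x\<in>{- int N .. int N - 1}. g (swp x \<eta>)) - 2 * N * g \<eta>"
    by (simp add: sum_subtractf)
  show ?thesis using RR_pos unfolding gen_def Pop_def RR_def h by (simp add: field_simps)
qed

lemma lin_aux: "finite K \<Longrightarrow> (\<Sum>k\<in>K. c k * (\<alpha> * ((1/2) * A k + rp * B k + (1-rp) * C k + rm * D k + (1-rm) * E k)))
  = \<alpha> * ((1/2) * (\<Sum>k\<in>K. c k * A k) + rp * (\<Sum>k\<in>K. c k * B k) + (1-rp) * (\<Sum>k\<in>K. c k * C k)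
     + rm * (\<Sum>k\<in>K. c k * D k) + (1-rm) * (\<Sum>k\<in>K. c k * E k))"
  by (simp add: sum_distrib_left sum.distrib ring_distribs mult.left_commute)

lemma Pop_lin: "finite K \<Longrightarrow> Pop (\<lambda>\<xi>. \<Sum>k\<in>K. c k * h k \<xi>) \<eta> = (\<Sum>k\<in>K. c k * Pop (h k) \<eta>)"
proof -
  assume K: "finite K"
  have 1: "(\<Sum>x\<in>{- int N .. int N - 1}. \<Sum>k\<in>K. c k * h k (swp x \<eta>)) = (\<Sum>k\<in>K. c k * (\<Sum>x\<in>{- int N .. int N - 1}. h k (swp x \<eta>)))"
    by (simp add: sum.swap[of _ "{- int N .. int N - 1}"] sum_distrib_left)
  show ?thesis unfolding Pop_def lin_aux[OF K] 1 ..
qed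
lemma gen_lin: "finite K \<Longrightarrow> gen N rp rm (\<lambda>\<xi>. \<Sum>k\<in>K. c k * h k \<xi>) \<eta> = (\<Sum>k\<in>K. c k * gen N rp rm (h k) \<eta>)"
  by (simp add: gen_Pop Pop_lin sum_distrib_left sum_subtractf algebra_simps)

lemma rp0: "0 \<le> rp" using rmrp rm0 by simp
lemma rp1': "0 \<le> 1 - rp" using rp1 by simp
lemma rm1': "0 \<le> 1 - rm" using rmrp rp1 by simp

lemma genpow: "(gen N rp rm ^^ n) f \<eta> = RR^n * (\<Sum>k\<le>n. real (n choose k) * (-1)^(n-k) * (Pop^^k) f \<eta>)"
proof (induction n arbitrary: \<eta>)
  case 0 then show ?case by simp
next
  case (Suc n)
  have e: "(gen N rp rm ^^ n) f = (\<lambda>\<xi>. \<Sum>k\<le>n. (RR^n * (real (n choose k) * (-1)^(n-k))) * (Pop^^k) f \<xi>)"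
    using Suc.IH by (auto simp: sum_distrib_left mult.assoc)
  have "(gen N rp rm ^^ Suc n) f \<eta> = gen N rp rm ((gen N rp rm ^^ n) f) \<eta>" by simp
  also have "\<dots> = (\<Sum>k\<le>n. (RR^n * (real (n choose k) * (-1)^(n-k))) * (RR * ((Pop^^Suc k) f \<eta> - (Pop^^k) f \<eta>)))"
    unfolding e by (simp only: gen_lin[OF finite_atMost] gen_Pop) simp
  also have "\<dots> = RR^Suc n * ((\<Sum>k\<le>n. real (n choose k) * (-1)^(n-k) * (Pop^^Suc k) f \<eta>) - (\<Sum>k\<le>n. real (n choose k) * (-1)^(n-k) * (Pop^^k) f \<eta>))"
    by (simp add: sum_distrib_left sum_subtractf[symmetric] algebra_simps)
  also have "\<dots> = RR^Suc n * (\<Sum>k\<le>Suc n. real (Suc n choose k) * (-1)^(Suc n - k) * (Pop^^k) f \<eta>)"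
    using pascal[of n "\<lambda>k. (Pop^^k) f \<eta>"] by simp
  finally show ?case .
qed

lemma comb_bound:
  assumes "0 \<le> \<alpha>" "\<bar>S\<bar> \<le> S'" "\<bar>a\<bar> \<le> a'" "\<bar>b\<bar> \<le> b'" "\<bar>c\<bar> \<le> c'" "\<bar>d\<bar> \<le> d'"
  shows "\<bar>\<alpha> * ((1/2) * S + rp * a + (1-rp) * b + rm * c + (1-rm) * d)\<bar> \<le> \<alpha> * ((1/2) * S' + rp * a' + (1-rp) * b' + rm * c' + (1-rm) * d')"
proof -
  have "\<bar>(1/2) * S + rp * a + (1-rp) * b + rm * c + (1-rm) * d\<bar> \<le> (1/2) * \<bar>S\<bar> + rp * \<bar>a\<bar> + (1-rp) * \<bar>b\<bar> + rm * \<bar>c\<bar> + (1-rm) * \<bar>d\<bar>"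
    using rp0 rp1' rm0 rm1' by (simp add: abs_mult abs_triangle_ineq order_trans[OF abs_triangle_ineq add_mono])
  also have "\<dots> \<le> (1/2) * S' + rp * a' + (1-rp) * b' + rm * c' + (1-rm) * d'"
    using assms rp0 rp1' rm0 rm1' by (intro add_mono mult_left_mono) auto
  finally show ?thesis using assms(1) by (simp add: abs_mult mult_left_mono)
qed

abbreviation "E \<equiv> {- int N .. int N - 1}"

lemma Pop_shift: "Pop g \<eta> - c = (1/RR) * ((1/2) * (\<Sum>x\<in>E. g (swp x \<eta>) - c) + rp * (g (\<eta>(int N := True)) - c)
   + (1-rp) * (g (\<eta>(int N := False)) - c) + rm * (g (\<eta>(- int N := True)) - c) + (1-rm) * (g (\<eta>(- int N := False)) - c))"
proof -
  have h: "(\<Sum>x\<in>E. g (swp x \<eta>) - c) = (\<Sum>x\<in>E. g (swp x \<eta>)) - 2 * N * c"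
    by (simp add: sum_subtractf)
  show ?thesis using RR_pos unfolding Pop_def h RR_def by (simp add: field_simps)
qed

lemma Pop_diff: "Pop g \<eta> - Pop g \<xi> = (1/RR) * ((1/2) * (\<Sum>x\<in>E. g (swp x \<eta>) - g (swp x \<xi>)) + rp * (g (\<eta>(int N := True)) - g (\<xi>(int N := True)))
   + (1-rp) * (g (\<eta>(int N := False)) - g (\<xi>(int N := False))) + rm * (g (\<eta>(- int N := True)) - g (\<xi>(- int N := True)))
   + (1-rm) * (g (\<eta>(- int N := False)) - g (\<xi>(- int N := False))))"
  unfolding Pop_def by (simp add: sum_subtractf algebra_simps)

lemma Pop_absbound:
  assumes "\<forall>x\<in>E. \<bar>g (swp x \<eta>) - c\<bar> \<le> M" "\<bar>g (\<eta>(int N := True)) - c\<bar> \<le> M" "\<bar>g (\<eta>(int N := False)) - c\<bar> \<le> M"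
    "\<bar>g (\<eta>(- int N := True)) - c\<bar> \<le> M" "\<bar>g (\<eta>(- int N := False)) - c\<bar> \<le> M"
  shows "\<bar>Pop g \<eta> - c\<bar> \<le> M"
proof -
  have S: "\<bar>\<Sum>x\<in>E. g (swp x \<eta>) - c\<bar> \<le> 2 * N * M"
  proof -
    have "\<bar>\<Sum>x\<in>E. g (swp x \<eta>) - c\<bar> \<le> (\<Sum>x\<in>E. \<bar>g (swp x \<eta>) - c\<bar>)" by (rule sum_abs)
    also have "\<dots> \<le> (\<Sum>x\<in>E. M)" using assms(1) by (intro sum_mono) auto
    finally show ?thesis by simp
  qed
  have "\<bar>Pop g \<eta> - c\<bar> \<le> (1/RR) * ((1/2) * (2 * N * M) + rp * M + (1-rp) * M + rm * M + (1-rm) * M)"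
    unfolding Pop_shift using RR_pos by (intro comb_bound S assms) auto
  also have "\<dots> = M" using RR_pos unfolding RR_def by (simp add: field_simps)
  finally show ?thesis .
qed

lemma Pop_bound: "(\<forall>\<xi>. \<bar>g \<xi>\<bar> \<le> B) \<Longrightarrow> \<bar>Pop g \<eta>\<bar> \<le> B"
  using Pop_absbound[of g \<eta> 0 B] by simp

lemma Pk_bound: "(\<forall>\<xi>. \<bar>g \<xi>\<bar> \<le> B) \<Longrightarrow> \<bar>(Pop^^k) g \<eta>\<bar> \<le> B"
  by (induction k arbitrary: \<eta>) (auto intro: Pop_bound)

lemma Pop_nonneg: "(\<forall>\<xi>. 0 \<le> g \<xi>) \<Longrightarrow> 0 \<le> Pop g \<eta>"
  unfolding Pop_def using RR_pos rp0 rp1' rm0 rm1' by (intro mult_nonneg_nonneg add_nonneg_nonneg sum_nonneg) auto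

lemma Pk_nonneg: "(\<forall>\<xi>. 0 \<le> g \<xi>) \<Longrightarrow> 0 \<le> (Pop^^k) g \<eta>"
  by (induction k arbitrary: \<eta>) (auto intro: Pop_nonneg)

lemma Pop_const: "Pop (\<lambda>_. c) \<eta> = c"
  using Pop_shift[of "\<lambda>_. c" \<eta> c] by simp

lemma Pk_const: "(Pop^^k) (\<lambda>_. c) \<eta> = c"
proof (induction k arbitrary: \<eta>)
  case (Suc k)
  have "(Pop^^Suc k) (\<lambda>_. c) = Pop ((Pop^^k) (\<lambda>_. c))" by simp
  also have "(Pop^^k) (\<lambda>_. c) = (\<lambda>_. c)" using Suc by auto
  finally show ?case by (simp add: Pop_const)
qed simp

lemma term_id:
  fixes x p :: real
  assumes "i \<le> k"
  shows "x^i / fact i * p * ((-x)^(k-i) / fact (k-i)) = x^k / fact k * (real (k choose i) * (-1)^(k-i) * p)"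
proof -
  have xk: "x^k = x^i * x^(k-i)" using assms by (simp add: power_add[symmetric])
  have "real (k choose i) = fact k / (fact i * fact (k-i))" using binomial_fact[OF assms] by simp
  then show ?thesis unfolding xk by (simp add: power_minus[of x] field_simps)
qed

lemma semi_sums:
  assumes B: "\<forall>\<xi>. \<bar>f \<xi>\<bar> \<le> B"
  shows "(\<lambda>n. t^n / fact n * (gen N rp rm ^^ n) f \<eta>) sums (exp (-(RR*t)) * (\<Sum>k. (RR*t)^k / fact k * (Pop^^k) f \<eta>))"
proof -
  define a where "a k = (RR*t)^k / fact k * (Pop^^k) f \<eta>" for k
  define b where "b k = (-(RR*t))^k / fact k" for k
  have se: "summable (\<lambda>k. inverse (fact k) * \<bar>RR*t\<bar>^k)" by (rule summable_exp)
  have sa: "summable (\<lambda>k. norm (a k))"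
  proof (rule summable_comparison_test)
    show "summable (\<lambda>k. B * (inverse (fact k) * \<bar>RR*t\<bar>^k))" using se by (rule summable_mult)
    show "\<exists>N0. \<forall>n\<ge>N0. norm (norm (a n)) \<le> B * (inverse (fact n) * \<bar>RR*t\<bar>^n)"
    proof (intro exI allI impI)
      fix n :: nat
      have "\<bar>(Pop^^n) f \<eta>\<bar> \<le> B" using Pk_bound[OF B] .
      then have "\<bar>(Pop^^n) f \<eta>\<bar> * (inverse (fact n) * \<bar>RR*t\<bar>^n) \<le> B * (inverse (fact n) * \<bar>RR*t\<bar>^n)"
        by (intro mult_right_mono) auto
      then show "norm (norm (a n)) \<le> B * (inverse (fact n) * \<bar>RR*t\<bar>^n)"
        unfolding a_def by (simp add: abs_mult power_abs divide_inverse mult.commute mult.left_commute)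
    qed
  qed
  have sb: "summable (\<lambda>k. norm (b k))"
  proof -
    have "norm (b k) = inverse (fact k) * \<bar>RR*t\<bar>^k" for k
      unfolding b_def by (simp add: abs_mult power_abs divide_inverse mult.commute)
    then show ?thesis using se by simp
  qed
  have bsum: "(\<Sum>k. b k) = exp (-(RR*t))"
  proof -
    have "b = (\<lambda>n. (-(RR*t))^n /\<^sub>R fact n)" unfolding b_def by (simp add: divide_inverse mult.commute)
    then show ?thesis using exp_converges[of "-(RR*t)"] sums_unique by metis
  qed
  have "(\<lambda>k. \<Sum>i\<le>k. a i * b (k - i)) sums ((\<Sum>k. a k) * (\<Sum>k. b k))"
    by (rule Cauchy_product_sums[OF sa sb])
  moreover have "(\<Sum>i\<le>k. a i * b (k - i)) = t^k / fact k * (gen N rp rm ^^ k) f \<eta>" for k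
  proof -
    have "(\<Sum>i\<le>k. a i * b (k - i)) = (\<Sum>i\<le>k. (RR*t)^k / fact k * (real (k choose i) * (-1)^(k-i) * (Pop^^i) f \<eta>))"
      unfolding a_def b_def by (intro sum.cong refl term_id) auto
    also have "\<dots> = t^k / fact k * (gen N rp rm ^^ k) f \<eta>"
      by (simp only: genpow sum_distrib_left[symmetric]) (simp add: power_mult_distrib)
    finally show ?thesis .
  qed
  ultimately show ?thesis unfolding bsum a_def by (simp add: mult.commute)
qed

lemma semi_rep: "\<forall>\<xi>. \<bar>f \<xi>\<bar> \<le> B \<Longrightarrow> semigroup N rp rm t f \<eta> = exp (-(RR*t)) * (\<Sum>k. (RR*t)^k / fact k * (Pop^^k) f \<eta>)"
  unfolding semigroup_def using sums_unique[OF semi_sums] by (rule sym)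

lemma semi_summable: "\<forall>\<xi>. \<bar>f \<xi>\<bar> \<le> B \<Longrightarrow> summable (\<lambda>n. t^n / fact n * (gen N rp rm ^^ n) f \<eta>)"
  using sums_summable[OF semi_sums] .

lemma Pk_summable_abs:
  assumes B: "\<forall>\<xi>. \<bar>f \<xi>\<bar> \<le> B"
  shows "summable (\<lambda>k. norm ((RR*t)^k / fact k * (Pop^^k) f \<eta>))"
proof -
  define a where "a k = (RR*t)^k / fact k * (Pop^^k) f \<eta>" for k
  have se: "summable (\<lambda>k. inverse (fact k) * \<bar>RR*t\<bar>^k)" by (rule summable_exp)
  have sa: "summable (\<lambda>k. norm (a k))"
  proof (rule summable_comparison_test)
    show "summable (\<lambda>k. B * (inverse (fact k) * \<bar>RR*t\<bar>^k))" using se by (rule summable_mult)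
    show "\<exists>N0. \<forall>n\<ge>N0. norm (norm (a n)) \<le> B * (inverse (fact n) * \<bar>RR*t\<bar>^n)"
    proof (intro exI allI impI)
      fix n :: nat
      have "\<bar>(Pop^^n) f \<eta>\<bar> \<le> B" using Pk_bound[OF B] .
      then have "\<bar>(Pop^^n) f \<eta>\<bar> * (inverse (fact n) * \<bar>RR*t\<bar>^n) \<le> B * (inverse (fact n) * \<bar>RR*t\<bar>^n)"
        by (intro mult_right_mono) auto
      then show "norm (norm (a n)) \<le> B * (inverse (fact n) * \<bar>RR*t\<bar>^n)"
        unfolding a_def by (simp add: abs_mult power_abs divide_inverse mult.commute mult.left_commute)
    qed
  qed
  then show ?thesis unfolding a_def .
qed

lemma Pk_summable: "\<forall>\<xi>. \<bar>f \<xi>\<bar> \<le> B \<Longrightarrow> summable (\<lambda>k. (RR*t)^k / fact k * (Pop^^k) f \<eta>)"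
  by (rule summable_norm_cancel[OF Pk_summable_abs])

definition AA :: real where "AA = (real N + 1)^2"
definition phi :: "int \<Rightarrow> real" where "phi y = AA - (real_of_int y)^2"
definition DD :: "config \<Rightarrow> config \<Rightarrow> int \<Rightarrow> real" where "DD \<eta> \<xi> y = (if \<eta> y \<noteq> \<xi> y then 1 else 0)"
abbreviation "V \<equiv> {- int N .. int N}"
definition dd :: "config \<Rightarrow> config \<Rightarrow> real" where "dd \<eta> \<xi> = (\<Sum>y\<in>V. DD \<eta> \<xi> y * phi y)"

lemma AA_pos: "AA > 0" unfolding AA_def by simp

lemma phi_ge: "y \<in> V \<Longrightarrow> phi y \<ge> 2 * N + 1"
proof -
  assume "y \<in> V"
  then have "\<bar>real_of_int y\<bar> \<le> real N" by auto
  then have "(real_of_int y)^2 \<le> (real N)^2" by (metis abs_ge_zero power2_abs power_mono)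
  then show ?thesis unfolding phi_def AA_def by (simp add: power2_eq_square algebra_simps)
qed

lemma phi_le: "phi y \<le> AA" unfolding phi_def by simp

lemma DD01: "0 \<le> DD \<eta> \<xi> y" "DD \<eta> \<xi> y \<le> 1" unfolding DD_def by auto

lemma dd_nonneg: "0 \<le> dd \<eta> \<xi>"
  unfolding dd_def using phi_ge by (intro sum_nonneg) (auto simp: DD_def intro: order_trans[OF _ phi_ge])

lemma dd_le: "dd \<eta> \<xi> \<le> (2 * N + 1) * AA"
proof -
  have "dd \<eta> \<xi> \<le> (\<Sum>y\<in>V. AA)" unfolding dd_def
  proof (intro sum_mono)
    fix y assume "y \<in> V"
    then have "0 \<le> phi y" using phi_ge[of y] by simp
    then show "DD \<eta> \<xi> y * phi y \<le> AA" using phi_le[of y] DD01[of \<eta> \<xi> y] by (simp add: mult_le_one order_trans[OF mult_left_le_one_le])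
  qed
  also have "\<dots> = (2 * N + 1) * AA" by simp
  finally show ?thesis .
qed

lemma dd_pos: "\<eta> \<in> configs N \<Longrightarrow> \<xi> \<in> configs N \<Longrightarrow> \<eta> \<noteq> \<xi> \<Longrightarrow> dd \<eta> \<xi> \<ge> 2 * N + 1"
proof -
  assume h: "\<eta> \<in> configs N" "\<xi> \<in> configs N" "\<eta> \<noteq> \<xi>"
  then obtain y where y: "\<eta> y \<noteq> \<xi> y" by auto
  have yV: "y \<in> V" using h y unfolding configs_def by auto
  have "DD \<eta> \<xi> y * phi y \<le> dd \<eta> \<xi>" unfolding dd_def
    using yV phi_ge by (intro member_le_sum) (auto simp: DD_def intro: order_trans[OF _ phi_ge])
  then show ?thesis using y phi_ge[OF yV] by (simp add: DD_def)
qed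

lemma sum_two_points:
  fixes g :: "int \<Rightarrow> real"
  assumes "x \<in> S" "x+1 \<in> S" "finite S" "\<forall>y\<in>S. y \<noteq> x \<and> y \<noteq> x+1 \<longrightarrow> g y = 0"
  shows "sum g S = g x + g (x+1)"
proof -
  have "sum g S = sum g {x, x+1}" using assms by (intro sum.mono_neutral_right) auto
  then show ?thesis by simp
qed

lemma sum_one_point:
  fixes g :: "int \<Rightarrow> real"
  assumes "x \<in> S" "finite S" "\<forall>y\<in>S. y \<noteq> x \<longrightarrow> g y = 0"
  shows "sum g S = g x"
proof -
  have "sum g S = sum g {x}" using assms by (intro sum.mono_neutral_right) auto
  then show ?thesis by simp
qed

lemma dd_swp: assumes "x \<in> E"
  shows "dd (swp x \<eta>) (swp x \<xi>) = dd \<eta> \<xi> + (DD \<eta> \<xi> (x+1) - DD \<eta> \<xi> x) * (phi x - phi (x+1))"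
proof -
  have "dd (swp x \<eta>) (swp x \<xi>) - dd \<eta> \<xi> = (\<Sum>y\<in>V. (DD (swp x \<eta>) (swp x \<xi>) y - DD \<eta> \<xi> y) * phi y)"
    unfolding dd_def by (simp add: sum_subtractf[symmetric] algebra_simps)
  also have "\<dots> = (DD (swp x \<eta>) (swp x \<xi>) x - DD \<eta> \<xi> x) * phi x + (DD (swp x \<eta>) (swp x \<xi>) (x+1) - DD \<eta> \<xi> (x+1)) * phi (x+1)"
    using assms by (intro sum_two_points) (auto simp: DD_def swp_def)
  also have "\<dots> = (DD \<eta> \<xi> (x+1) - DD \<eta> \<xi> x) * (phi x - phi (x+1))"
    by (simp add: DD_def swp_def algebra_simps)
  finally show ?thesis by simp
qed

lemma dd_upd: assumes "z \<in> V"
  shows "dd (\<eta>(z := b)) (\<xi>(z := b)) = dd \<eta> \<xi> - DD \<eta> \<xi> z * phi z"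
proof -
  have "dd (\<eta>(z := b)) (\<xi>(z := b)) - dd \<eta> \<xi> = (\<Sum>y\<in>V. (DD (\<eta>(z := b)) (\<xi>(z := b)) y - DD \<eta> \<xi> y) * phi y)"
    unfolding dd_def by (simp add: sum_subtractf[symmetric] algebra_simps)
  also have "\<dots> = (DD (\<eta>(z := b)) (\<xi>(z := b)) z - DD \<eta> \<xi> z) * phi z"
    using assms by (intro sum_one_point) (auto simp: DD_def)
  also have "\<dots> = - DD \<eta> \<xi> z * phi z" by (simp add: DD_def)
  finally show ?thesis by simp
qed

lemma key_ineq:
  fixes \<delta> :: "int \<Rightarrow> real"
  assumes d01: "\<And>y. 0 \<le> \<delta> y"
  shows "(1/2) * (\<Sum>x\<in>E. (\<delta> (x+1) - \<delta> x) * (phi x - phi (x+1))) - \<delta> (int N) * phi (int N) - \<delta> (- int N) * phi (- int N)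
     \<le> - (1/AA) * (\<Sum>y\<in>V. \<delta> y * phi y)"
proof -
  let ?I = "{- int N + 1 .. int N - 1}"
  have pd: "phi x - phi (x+1) = 2 * x + 1" for x unfolding phi_def by (simp add: power2_eq_square algebra_simps)
  have E1: "E = insert (- int N) ?I" using Npos by auto
  have E2: "{- int N + 1 .. int N} = insert (int N) ?I" using Npos by auto
  have V1: "V = insert (- int N) (insert (int N) ?I)" using Npos by auto
  have re: "(\<Sum>x\<in>E. \<delta> (x+1) * (2 * x + 1)) = (\<Sum>y\<in>{- int N + 1 .. int N}. \<delta> y * (2 * y - 1))"
    by (rule sum.reindex_bij_witness[of _ "\<lambda>y. y - 1" "\<lambda>x. x + 1"]) (auto simp: algebra_simps)
  have s1: "(\<Sum>x\<in>E. \<delta> (x+1) * (2 * x + 1)) = \<delta> (int N) * (2 * real N - 1) + (\<Sum>y\<in>?I. \<delta> y * (2 * y - 1))"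
    unfolding re E2 by simp
  have s2: "(\<Sum>x\<in>E. \<delta> x * (2 * x + 1)) = \<delta> (- int N) * (1 - 2 * real N) + (\<Sum>y\<in>?I. \<delta> y * (2 * y + 1))"
    unfolding E1 by simp
  have s3: "(\<Sum>y\<in>?I. \<delta> y * (2 * y - 1)) - (\<Sum>y\<in>?I. \<delta> y * (2 * y + 1)) = - 2 * (\<Sum>y\<in>?I. \<delta> y)"
    by (simp add: sum_subtractf[symmetric] sum_distrib_left algebra_simps)
  have "(\<Sum>x\<in>E. (\<delta> (x+1) - \<delta> x) * (phi x - phi (x+1))) = (\<Sum>x\<in>E. \<delta> (x+1) * (2 * x + 1)) - (\<Sum>x\<in>E. \<delta> x * (2 * x + 1))"
    unfolding pd by (simp add: sum_subtractf[symmetric] algebra_simps)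
  also have "\<dots> = \<delta> (int N) * (2 * real N - 1) + \<delta> (- int N) * (2 * real N - 1) - 2 * (\<Sum>y\<in>?I. \<delta> y)"
    unfolding s1 s2 using s3 by (simp add: algebra_simps)
  finally have A: "(\<Sum>x\<in>E. (\<delta> (x+1) - \<delta> x) * (phi x - phi (x+1))) = \<delta> (int N) * (2 * real N - 1) + \<delta> (- int N) * (2 * real N - 1) - 2 * (\<Sum>y\<in>?I. \<delta> y)" .
  have pN: "phi (int N) = 2 * N + 1" "phi (- int N) = 2 * N + 1" unfolding phi_def AA_def by (simp_all add: power2_eq_square algebra_simps)
  have "(1/2) * (\<Sum>x\<in>E. (\<delta> (x+1) - \<delta> x) * (phi x - phi (x+1))) - \<delta> (int N) * phi (int N) - \<delta> (- int N) * phi (- int N)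
      \<le> - (\<Sum>y\<in>V. \<delta> y)"
  proof -
    have h1: "0 \<le> real N * \<delta> (int N)" "0 \<le> real N * \<delta> (- int N)" using d01 by auto
    show ?thesis unfolding A pN V1 using Npos d01[of "int N"] d01[of "- int N"]
      by (simp add: algebra_simps) (use h1 in linarith)
  qed
  also have "\<dots> \<le> - (1/AA) * (\<Sum>y\<in>V. \<delta> y * phi y)"
  proof -
    have "(\<Sum>y\<in>V. \<delta> y * phi y) \<le> (\<Sum>y\<in>V. \<delta> y * AA)"
      using d01 phi_le by (intro sum_mono mult_left_mono) auto
    then have "(1/AA) * (\<Sum>y\<in>V. \<delta> y * phi y) \<le> (\<Sum>y\<in>V. \<delta> y)"
      using AA_pos by (simp add: sum_distrib_left[symmetric] field_simps)
    then show ?thesis by simp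
  qed
  finally show ?thesis .
qed

abbreviation "CN \<equiv> configs N"

lemma swp_C: "\<eta> \<in> CN \<Longrightarrow> x \<in> E \<Longrightarrow> swp x \<eta> \<in> CN"
  unfolding configs_def swp_def by auto

lemma upd_C: "\<eta> \<in> CN \<Longrightarrow> z \<in> V \<Longrightarrow> \<eta>(z := b) \<in> CN"
  unfolding configs_def by auto

definition qq :: real where "qq = 1 - 1 / (AA * RR)"

definition Lip :: "real \<Rightarrow> (config \<Rightarrow> real) \<Rightarrow> bool" where
  "Lip K g \<longleftrightarrow> (\<forall>\<eta>\<in>CN. \<forall>\<xi>\<in>CN. \<bar>g \<eta> - g \<xi>\<bar> \<le> K * dd \<eta> \<xi>)"

lemma NV: "int N \<in> V" "- int N \<in> V" by auto

lemma Lip_Pop: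
  assumes L: "Lip K g" and K: "0 \<le> K"
  shows "Lip (K * qq) (Pop g)"
  unfolding Lip_def
proof (intro ballI)
  fix \<eta> \<xi> assume h: "\<eta> \<in> CN" "\<xi> \<in> CN"
  let ?d = "dd \<eta> \<xi>"
  let ?\<delta> = "DD \<eta> \<xi>"
  let ?X = "\<Sum>x\<in>E. (?\<delta> (x+1) - ?\<delta> x) * (phi x - phi (x+1))"
  have Lg: "\<bar>g a - g b\<bar> \<le> K * dd a b" if "a \<in> CN" "b \<in> CN" for a b using L that unfolding Lip_def by blast
  have S: "\<bar>\<Sum>x\<in>E. g (swp x \<eta>) - g (swp x \<xi>)\<bar> \<le> K * (2 * N * ?d + ?X)"
  proof -
    have "\<bar>\<Sum>x\<in>E. g (swp x \<eta>) - g (swp x \<xi>)\<bar> \<le> (\<Sum>x\<in>E. \<bar>g (swp x \<eta>) - g (swp x \<xi>)\<bar>)" by (rule sum_abs)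
    also have "\<dots> \<le> (\<Sum>x\<in>E. K * dd (swp x \<eta>) (swp x \<xi>))"
      using h by (intro sum_mono Lg swp_C) auto
    also have "\<dots> = K * (\<Sum>x\<in>E. ?d + (?\<delta> (x+1) - ?\<delta> x) * (phi x - phi (x+1)))"
      by (simp add: sum_distrib_left dd_swp)
    also have "\<dots> = K * (2 * N * ?d + ?X)" by (simp add: sum.distrib)
    finally show ?thesis .
  qed
  have up: "\<bar>g (\<eta>(z := b)) - g (\<xi>(z := b))\<bar> \<le> K * (?d - ?\<delta> z * phi z)" if "z \<in> V" for z b
    using Lg[OF upd_C[OF h(1) that, of b] upd_C[OF h(2) that, of b]] dd_upd[OF that, of \<eta> b \<xi>] by simp
  have "\<bar>Pop g \<eta> - Pop g \<xi>\<bar> \<le> (1/RR) * ((1/2) * (K * (2 * N * ?d + ?X)) + rp * (K * (?d - ?\<delta> (int N) * phi (int N)))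
      + (1-rp) * (K * (?d - ?\<delta> (int N) * phi (int N))) + rm * (K * (?d - ?\<delta> (- int N) * phi (- int N)))
      + (1-rm) * (K * (?d - ?\<delta> (- int N) * phi (- int N))))"
    unfolding Pop_diff using RR_pos by (intro comb_bound S up NV) auto
  also have "\<dots> = (K/RR) * ((N + 2) * ?d + ((1/2) * ?X - ?\<delta> (int N) * phi (int N) - ?\<delta> (- int N) * phi (- int N)))"
    by (simp add: algebra_simps)
  also have "\<dots> \<le> (K/RR) * ((N + 2) * ?d + (- (1/AA) * ?d))"
    using key_ineq[of ?\<delta>] DD01 K RR_pos unfolding dd_def by (intro mult_left_mono add_left_mono) auto
  also have "\<dots> = K * qq * ?d"
  proof -
    have nz: "AA * real N + AA * 2 \<noteq> 0" "real N + 2 \<noteq> 0" using AA_pos by (auto simp: add_pos_pos distrib_left[symmetric] simp del: distrib_left)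
    show ?thesis unfolding qq_def RR_def using AA_pos nz by (simp add: field_simps)
  qed
  finally show "\<bar>Pop g \<eta> - Pop g \<xi>\<bar> \<le> K * qq * ?d" .
qed

lemma qq_bounds: "0 \<le> qq" "qq \<le> 1"
proof -
  have "1 \<le> AA" unfolding AA_def by (simp add: one_le_power)
  moreover have "1 \<le> RR" unfolding RR_def by simp
  ultimately have "1 \<le> AA * RR" by (metis mult_mono order_trans mult_1_left zero_le_one)
  then show "0 \<le> qq" "qq \<le> 1" unfolding qq_def using AA_pos RR_pos by (auto simp: field_simps)
qed

lemma Lip_Pk: "Lip K g \<Longrightarrow> 0 \<le> K \<Longrightarrow> Lip (K * qq^k) ((Pop^^k) g)"
proof (induction k)
  case (Suc k)
  have "Lip (K * qq^k * qq) (Pop ((Pop^^k) g))" using Suc qq_bounds by (intro Lip_Pop) auto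
  then show ?case by (simp add: mult_ac)
qed simp

lemma exp_series_scaled: "(\<lambda>k. (RR*t)^k / fact k * (M * r^k)) sums (M * exp (RR*t*r))"
proof -
  have "(\<lambda>k. (RR*t*r)^k /\<^sub>R fact k) sums exp (RR*t*r)" by (rule exp_converges)
  then have "(\<lambda>k. M * ((RR*t*r)^k /\<^sub>R fact k)) sums (M * exp (RR*t*r))" by (rule sums_mult)
  moreover have "(\<lambda>k. M * ((RR*t*r)^k /\<^sub>R fact k)) = (\<lambda>k. (RR*t)^k / fact k * (M * r^k))"
    by (simp add: power_mult_distrib divide_inverse mult_ac)
  ultimately show ?thesis by simp
qed

lemma series_bound:
  assumes t: "0 \<le> t" and r: "0 \<le> r" and b: "\<And>k. \<bar>a k\<bar> \<le> (RR*t)^k / fact k * (M * r^k)"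
  shows "\<bar>suminf a\<bar> \<le> M * exp (RR*t*r)"
proof -
  have sg: "summable (\<lambda>k. (RR*t)^k / fact k * (M * r^k))" using exp_series_scaled by (rule sums_summable)
  have sa: "summable (\<lambda>k. \<bar>a k\<bar>)" using b sg by (intro summable_rabs_comparison_test) auto
  have "\<bar>suminf a\<bar> \<le> (\<Sum>k. \<bar>a k\<bar>)" using sa by (rule summable_rabs)
  also have "\<dots> \<le> (\<Sum>k. (RR*t)^k / fact k * (M * r^k))" using b sa sg by (rule suminf_le)
  also have "\<dots> = M * exp (RR*t*r)" using exp_series_scaled sums_unique by metis
  finally show ?thesis .
qed

lemma semi_abs:
  assumes B: "\<forall>\<xi>. \<bar>g \<xi>\<bar> \<le> B" and t: "0 \<le> t"
  shows "\<bar>semigroup N rp rm t g \<eta>\<bar> \<le> B"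
proof -
  have "\<bar>(\<Sum>k. (RR*t)^k / fact k * (Pop^^k) g \<eta>)\<bar> \<le> B * exp (RR*t*1)"
  proof (rule series_bound[OF t])
    fix k
    have "\<bar>(Pop^^k) g \<eta>\<bar> \<le> B" using Pk_bound[OF B] .
    moreover have "0 \<le> (RR*t)^k / fact k" using RR_pos t by simp
    ultimately show "\<bar>(RR*t)^k / fact k * (Pop^^k) g \<eta>\<bar> \<le> (RR*t)^k / fact k * (B * 1^k)"
      by (simp only: abs_mult abs_of_nonneg power_one mult_1_right mult_left_mono)
  qed simp
  then show ?thesis unfolding semi_rep[OF B] by (simp add: abs_mult exp_minus field_simps)
qed

lemma semi_osc:
  assumes B: "\<forall>\<xi>. \<bar>g \<xi>\<bar> \<le> 1" and t: "0 \<le> t" and h: "\<eta> \<in> CN" "\<xi> \<in> CN"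
  shows "\<bar>semigroup N rp rm t g \<eta> - semigroup N rp rm t g \<xi>\<bar> \<le> 2 * AA * exp (- t / AA)"
proof -
  define K :: real where "K = 2 / (2 * N + 1)"
  have K0: "0 \<le> K" unfolding K_def by simp
  have Lg: "Lip K g" unfolding Lip_def
  proof (intro ballI)
    fix a b assume ab: "a \<in> CN" "b \<in> CN"
    show "\<bar>g a - g b\<bar> \<le> K * dd a b"
    proof (cases "a = b")
      case True then show ?thesis using K0 dd_nonneg by simp
    next
      case False
      then have "2 * N + 1 \<le> dd a b" using dd_pos ab by auto
      then have "2 \<le> K * dd a b" unfolding K_def by (simp add: field_simps)
      moreover have "\<bar>g a - g b\<bar> \<le> 2" using B[rule_format, of a] B[rule_format, of b] by linarith
      ultimately show ?thesis by linarith
    qed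
  qed
  have LP: "\<bar>(Pop^^k) g \<eta> - (Pop^^k) g \<xi>\<bar> \<le> 2 * AA * qq^k" for k
  proof -
    have "\<bar>(Pop^^k) g \<eta> - (Pop^^k) g \<xi>\<bar> \<le> K * qq^k * dd \<eta> \<xi>"
      using Lip_Pk[OF Lg K0, of k] h unfolding Lip_def by blast
    also have "\<dots> \<le> K * qq^k * ((2 * N + 1) * AA)"
      using dd_le K0 qq_bounds by (intro mult_left_mono) auto
    also have "\<dots> = 2 * AA * qq^k" unfolding K_def by (simp add: field_simps)
    finally show ?thesis .
  qed
  have s1: "summable (\<lambda>k. (RR*t)^k / fact k * (Pop^^k) g \<eta>)" using Pk_summable[OF B] .
  have s2: "summable (\<lambda>k. (RR*t)^k / fact k * (Pop^^k) g \<xi>)" using Pk_summable[OF B] .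
  have "semigroup N rp rm t g \<eta> - semigroup N rp rm t g \<xi>
      = exp (-(RR*t)) * (\<Sum>k. (RR*t)^k / fact k * ((Pop^^k) g \<eta> - (Pop^^k) g \<xi>))"
  proof -
    have "(\<Sum>k. (RR*t)^k / fact k * (Pop^^k) g \<eta>) - (\<Sum>k. (RR*t)^k / fact k * (Pop^^k) g \<xi>)
       = (\<Sum>k. (RR*t)^k / fact k * ((Pop^^k) g \<eta> - (Pop^^k) g \<xi>))"
      by (subst suminf_diff[OF s1 s2]) (simp add: right_diff_distrib)
    then show ?thesis unfolding semi_rep[OF B] by (simp add: right_diff_distrib[symmetric])
  qed
  also have "\<bar>\<dots>\<bar> \<le> exp (-(RR*t)) * (2 * AA * exp (RR*t*qq))"
  proof -
    have "\<bar>(\<Sum>k. (RR*t)^k / fact k * ((Pop^^k) g \<eta> - (Pop^^k) g \<xi>))\<bar> \<le> 2 * AA * exp (RR*t*qq)"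
    proof (rule series_bound[OF t qq_bounds(1)])
      fix k
      have "0 \<le> (RR*t)^k / fact k" using RR_pos t by simp
      then show "\<bar>(RR*t)^k / fact k * ((Pop^^k) g \<eta> - (Pop^^k) g \<xi>)\<bar> \<le> (RR*t)^k / fact k * (2 * AA * qq^k)"
        using LP[of k] by (simp only: abs_mult abs_of_nonneg mult_left_mono)
    qed
    then show ?thesis by (simp add: abs_mult)
  qed
  also have "\<dots> = 2 * AA * exp (- t / AA)"
  proof -
    have "-(RR*t) + RR*t*qq = - t / AA" unfolding qq_def using RR_pos AA_pos by (simp add: field_simps)
    then show ?thesis by (metis exp_add mult.commute mult.left_commute)
  qed
  finally show ?thesis .
qed

lemma finite_configs: "finite CN"
proof -
  have "CN \<subseteq> (\<lambda>S x. x \<in> S) ` Pow V"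
  proof
    fix \<eta> assume "\<eta> \<in> CN"
    then have "{x. \<eta> x} \<in> Pow V" unfolding configs_def by auto
    moreover have "\<eta> = (\<lambda>x. x \<in> {x. \<eta> x})" by simp
    ultimately show "\<eta> \<in> (\<lambda>S x. x \<in> S) ` Pow V" by blast
  qed
  then show ?thesis by (rule finite_subset) simp
qed

definition ind :: "config \<Rightarrow> config \<Rightarrow> real" where "ind \<zeta> = (\<lambda>\<xi>. if \<xi> = \<zeta> then 1 else 0)"

lemma Pk_lin: "finite I \<Longrightarrow> (Pop^^k) (\<lambda>\<xi>. \<Sum>i\<in>I. a i * h i \<xi>) \<eta> = (\<Sum>i\<in>I. a i * (Pop^^k) (h i) \<eta>)"
proof (induction k arbitrary: \<eta>)
  case (Suc k)
  have "(Pop^^k) (\<lambda>\<xi>. \<Sum>i\<in>I. a i * h i \<xi>) = (\<lambda>\<xi>. \<Sum>i\<in>I. a i * (Pop^^k) (h i) \<xi>)"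
    using Suc by auto
  then show ?case using Pop_lin[OF Suc.prems] by simp
qed simp

lemma Pop_cong: "(\<forall>\<xi>\<in>CN. g1 \<xi> = g2 \<xi>) \<Longrightarrow> \<eta> \<in> CN \<Longrightarrow> Pop g1 \<eta> = Pop g2 \<eta>"
proof -
  assume a: "\<forall>\<xi>\<in>CN. g1 \<xi> = g2 \<xi>" "\<eta> \<in> CN"
  have "(\<Sum>x\<in>E. g1 (swp x \<eta>)) = (\<Sum>x\<in>E. g2 (swp x \<eta>))"
    using a swp_C by (intro sum.cong) auto
  moreover have "g1 (\<eta>(z := b)) = g2 (\<eta>(z := b))" if "z \<in> V" for z b using a upd_C that by auto
  ultimately show ?thesis unfolding Pop_def using NV by simp
qed

lemma Pk_cong: "(\<forall>\<xi>\<in>CN. g1 \<xi> = g2 \<xi>) \<Longrightarrow> \<eta> \<in> CN \<Longrightarrow> (Pop^^k) g1 \<eta> = (Pop^^k) g2 \<eta>"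
proof (induction k arbitrary: \<eta>)
  case (Suc k)
  then show ?case using Pop_cong[of "(Pop^^k) g1" "(Pop^^k) g2" \<eta>] by simp
qed simp

lemma ind_rep: "\<xi> \<in> CN \<Longrightarrow> (\<Sum>\<eta>\<in>CN. h \<eta> * ind \<eta> \<xi>) = h \<xi>"
  using finite_configs by (simp add: ind_def if_distrib cong: if_cong)

lemma Pk_rep: "\<eta>0 \<in> CN \<Longrightarrow> (Pop^^k) h \<eta>0 = (\<Sum>\<eta>\<in>CN. h \<eta> * (Pop^^k) (ind \<eta>) \<eta>0)"
proof -
  assume h0: "\<eta>0 \<in> CN"
  have "(Pop^^k) h \<eta>0 = (Pop^^k) (\<lambda>\<xi>. \<Sum>\<eta>\<in>CN. h \<eta> * ind \<eta> \<xi>) \<eta>0"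
    using h0 ind_rep by (intro Pk_cong) auto
  also have "\<dots> = (\<Sum>\<eta>\<in>CN. h \<eta> * (Pop^^k) (ind \<eta>) \<eta>0)" by (rule Pk_lin[OF finite_configs])
  finally show ?thesis .
qed

lemma Lip_bounded:
  assumes B: "\<forall>\<xi>. \<bar>g \<xi>\<bar> \<le> 1"
  shows "Lip (2 / (2 * N + 1)) g"
  unfolding Lip_def
proof (intro ballI)
  fix a b assume ab: "a \<in> CN" "b \<in> CN"
  show "\<bar>g a - g b\<bar> \<le> 2 / (2 * N + 1) * dd a b"
  proof (cases "a = b")
    case True then show ?thesis using dd_nonneg by simp
  next
    case False
    then have "2 * N + 1 \<le> dd a b" using dd_pos ab by auto
    then have "2 \<le> 2 / (2 * N + 1) * dd a b" by (simp add: field_simps)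
    moreover have "\<bar>g a - g b\<bar> \<le> 2" using B[rule_format, of a] B[rule_format, of b] by linarith
    ultimately show ?thesis by linarith
  qed
qed

lemma qq_less: "qq < 1" unfolding qq_def using AA_pos RR_pos by simp

lemma Pk_conv:
  assumes B: "\<forall>\<xi>. \<bar>g \<xi>\<bar> \<le> 1" and h0: "\<eta>0 \<in> CN"
  shows "convergent (\<lambda>k. (Pop^^k) g \<eta>0)"
proof -
  define u where "u k = (Pop^^k) g \<eta>0" for k
  have step: "\<bar>u (Suc k) - u k\<bar> \<le> 2 * AA * qq^k" for k
  proof -
    have L: "Lip (2 / (2 * N + 1) * qq^k) ((Pop^^k) g)" using Lip_Pk[OF Lip_bounded[OF B]] by simp
    have m: "\<bar>(Pop^^k) g \<zeta> - (Pop^^k) g \<eta>0\<bar> \<le> 2 * AA * qq^k" if "\<zeta> \<in> CN" for \<zeta>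
    proof -
      have "\<bar>(Pop^^k) g \<zeta> - (Pop^^k) g \<eta>0\<bar> \<le> 2 / (2 * N + 1) * qq^k * dd \<zeta> \<eta>0"
        using L that h0 unfolding Lip_def by blast
      also have "\<dots> \<le> 2 / (2 * N + 1) * qq^k * ((2 * N + 1) * AA)"
        using dd_le qq_bounds by (intro mult_left_mono) auto
      also have "\<dots> = 2 * AA * qq^k" by (simp add: field_simps)
      finally show ?thesis .
    qed
    have "\<bar>Pop ((Pop^^k) g) \<eta>0 - (Pop^^k) g \<eta>0\<bar> \<le> 2 * AA * qq^k"
    proof (rule Pop_absbound)
      show "\<forall>x\<in>E. \<bar>(Pop^^k) g (swp x \<eta>0) - (Pop^^k) g \<eta>0\<bar> \<le> 2 * AA * qq^k"
        using m swp_C[OF h0] by blast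
    qed (use m upd_C[OF h0] NV in blast)+
    then show ?thesis unfolding u_def by simp
  qed
  have "summable (\<lambda>k. qq^k)" using qq_bounds qq_less by (intro summable_geometric) simp
  then have sg: "summable (\<lambda>k. 2 * AA * qq^k)" by (rule summable_mult)
  have "summable (\<lambda>k. \<bar>u (Suc k) - u k\<bar>)"
    by (rule summable_rabs_comparison_test[OF _ sg]) (use step in blast)
  then have "summable (\<lambda>k. u (Suc k) - u k)" by (rule summable_rabs_cancel)
  then have "convergent (\<lambda>n. \<Sum>i<n. u (Suc i) - u i)" by (simp add: summable_iff_convergent)
  then have "convergent (\<lambda>n. u n - u 0)" by (simp add: sum_lessThan_telescope)
  then have "convergent (\<lambda>n. (u n - u 0) + u 0)" by (intro convergent_add convergent_const)
  then show ?thesis unfolding u_def by simp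
qed

definition eta0 :: config where "eta0 = (\<lambda>_. False)"
lemma eta0C: "eta0 \<in> CN" unfolding eta0_def configs_def by simp

definition pist :: "config \<Rightarrow> real" where
  "pist \<zeta> = (if \<zeta> \<in> CN then lim (\<lambda>k. (Pop^^k) (ind \<zeta>) eta0) else 0)"

lemma ind_bound: "\<forall>\<xi>. \<bar>ind \<zeta> \<xi>\<bar> \<le> 1" unfolding ind_def by simp

lemma pist_lim: "\<zeta> \<in> CN \<Longrightarrow> (\<lambda>k. (Pop^^k) (ind \<zeta>) eta0) \<longlonglongrightarrow> pist \<zeta>"
  unfolding pist_def using Pk_conv[OF ind_bound eta0C] by (simp add: convergent_LIMSEQ_iff)

lemma pist_lim_gen: "(\<lambda>k. (Pop^^k) h eta0) \<longlonglongrightarrow> (\<Sum>\<eta>\<in>CN. h \<eta> * pist \<eta>)"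
proof -
  have "(\<lambda>k. \<Sum>\<eta>\<in>CN. h \<eta> * (Pop^^k) (ind \<eta>) eta0) \<longlonglongrightarrow> (\<Sum>\<eta>\<in>CN. h \<eta> * pist \<eta>)"
    by (intro tendsto_sum tendsto_mult_left pist_lim)
  moreover have "(\<lambda>k. (Pop^^k) h eta0) = (\<lambda>k. \<Sum>\<eta>\<in>CN. h \<eta> * (Pop^^k) (ind \<eta>) eta0)"
    by (intro ext Pk_rep[OF eta0C])
  ultimately show ?thesis by simp
qed

lemma pist_Pop: "(\<Sum>\<eta>\<in>CN. Pop h \<eta> * pist \<eta>) = (\<Sum>\<eta>\<in>CN. h \<eta> * pist \<eta>)"
proof -
  have "(\<lambda>k. (Pop^^Suc k) h eta0) \<longlonglongrightarrow> (\<Sum>\<eta>\<in>CN. h \<eta> * pist \<eta>)"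
    using pist_lim_gen by (rule LIMSEQ_Suc)
  moreover have "(\<lambda>k. (Pop^^Suc k) h eta0) = (\<lambda>k. (Pop^^k) (Pop h) eta0)"
    by (simp only: funpow_Suc_right comp_def)
  ultimately have "(\<lambda>k. (Pop^^k) (Pop h) eta0) \<longlonglongrightarrow> (\<Sum>\<eta>\<in>CN. h \<eta> * pist \<eta>)" by simp
  then show ?thesis using pist_lim_gen LIMSEQ_unique by blast
qed

lemma pist_Pk: "(\<Sum>\<eta>\<in>CN. (Pop^^j) h \<eta> * pist \<eta>) = (\<Sum>\<eta>\<in>CN. h \<eta> * pist \<eta>)"
proof (induction j)
  case (Suc j)
  then show ?case using pist_Pop[of "(Pop^^j) h"] by simp
qed simp

lemma pist_nonneg: "0 \<le> pist \<zeta>"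
proof (cases "\<zeta> \<in> CN")
  case True
  have "\<forall>k. 0 \<le> (Pop^^k) (ind \<zeta>) eta0" using Pk_nonneg by (auto simp: ind_def)
  then show ?thesis using LIMSEQ_le_const[OF pist_lim[OF True]] by blast
qed (simp add: pist_def)

lemma pist_sum: "(\<Sum>\<eta>\<in>CN. pist \<eta>) = 1"
proof -
  have "(\<lambda>k. (Pop^^k) (\<lambda>_. 1) eta0) \<longlonglongrightarrow> (\<Sum>\<eta>\<in>CN. 1 * pist \<eta>)" by (rule pist_lim_gen)
  then have "(\<lambda>k. 1::real) \<longlonglongrightarrow> (\<Sum>\<eta>\<in>CN. pist \<eta>)" by (simp add: Pk_const)
  then show ?thesis using LIMSEQ_unique tendsto_const by metis
qed

lemma pist_prob: "prob_on N pist"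
proof -
  have "\<forall>\<eta>. \<eta> \<notin> CN \<longrightarrow> pist \<eta> = 0" by (simp add: pist_def)
  then show ?thesis unfolding prob_on_def using pist_nonneg pist_sum by blast
qed

lemma ind_eq: "(\<lambda>\<xi>. if \<xi> = \<zeta> then 1 else 0) = ind \<zeta>" unfolding ind_def ..

lemma pist_stat:
  assumes z: "\<zeta> \<in> CN"
  shows "law N rp rm pist t \<zeta> = pist \<zeta>"
proof -
  define c where "c k = (RR*t)^k / fact k" for k
  have sm: "summable (\<lambda>k. c k * (Pop^^k) (ind \<zeta>) \<eta>)" for \<eta>
    unfolding c_def using Pk_summable[OF ind_bound] .
  have "law N rp rm pist t \<zeta> = (\<Sum>\<eta>\<in>CN. pist \<eta> * (exp (-(RR*t)) * (\<Sum>k. c k * (Pop^^k) (ind \<zeta>) \<eta>)))"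
    unfolding law_def ind_eq c_def using semi_rep[OF ind_bound] by simp
  also have "\<dots> = exp (-(RR*t)) * (\<Sum>\<eta>\<in>CN. \<Sum>k. c k * ((Pop^^k) (ind \<zeta>) \<eta> * pist \<eta>))"
  proof -
    have "pist \<eta> * (\<Sum>k. c k * (Pop^^k) (ind \<zeta>) \<eta>) = (\<Sum>k. c k * ((Pop^^k) (ind \<zeta>) \<eta> * pist \<eta>))" for \<eta>
      using suminf_mult2[OF sm[of \<eta>], of "pist \<eta>"] by (simp add: mult_ac)
    then have "pist \<eta> * (exp (-(RR*t)) * (\<Sum>k. c k * (Pop^^k) (ind \<zeta>) \<eta>)) = exp (-(RR*t)) * (\<Sum>k. c k * ((Pop^^k) (ind \<zeta>) \<eta> * pist \<eta>))" for \<eta>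
      using mult.left_commute[of "pist \<eta>" "exp (-(RR*t))" "\<Sum>k. c k * (Pop^^k) (ind \<zeta>) \<eta>"] by simp
    then show ?thesis unfolding sum_distrib_left by (rule sum.cong[OF refl])
  qed
  also have "(\<Sum>\<eta>\<in>CN. \<Sum>k. c k * ((Pop^^k) (ind \<zeta>) \<eta> * pist \<eta>)) = (\<Sum>k. \<Sum>\<eta>\<in>CN. c k * ((Pop^^k) (ind \<zeta>) \<eta> * pist \<eta>))"
  proof (rule suminf_sum[symmetric])
    fix \<eta> show "summable (\<lambda>k. c k * ((Pop^^k) (ind \<zeta>) \<eta> * pist \<eta>))"
      using summable_mult2[OF sm[of \<eta>], of "pist \<eta>"] by (simp add: mult_ac)
  qed
  also have "\<dots> = (\<Sum>k. c k * (pist \<zeta> * 1^k))"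
  proof -
    have "(\<Sum>\<eta>\<in>CN. (Pop^^k) (ind \<zeta>) \<eta> * pist \<eta>) = pist \<zeta>" for k
    proof -
      have "(\<Sum>\<eta>\<in>CN. ind \<zeta> \<eta> * pist \<eta>) = pist \<zeta>"
      proof -
        have e: "(\<lambda>\<eta>. ind \<zeta> \<eta> * pist \<eta>) = (\<lambda>\<eta>. if \<eta> = \<zeta> then pist \<zeta> else 0)" by (auto simp: ind_def)
        show ?thesis unfolding e using finite_configs z by simp
      qed
      then show ?thesis using pist_Pk[of k "ind \<zeta>"] by linarith
    qed
    then show ?thesis by (simp add: sum_distrib_left[symmetric])
  qed
  also have "\<dots> = pist \<zeta> * exp (RR*t*1)" unfolding c_def using exp_series_scaled sums_unique by metis
  finally show ?thesis by (simp add: exp_minus field_simps)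
qed

lemma semi_lin:
  assumes Z: "finite Z" and hb: "\<forall>\<zeta>\<in>Z. \<forall>\<xi>. \<bar>h \<zeta> \<xi>\<bar> \<le> 1"
  shows "semigroup N rp rm t (\<lambda>\<xi>. \<Sum>\<zeta>\<in>Z. a \<zeta> * h \<zeta> \<xi>) \<eta> = (\<Sum>\<zeta>\<in>Z. a \<zeta> * semigroup N rp rm t (h \<zeta>) \<eta>)"
proof -
  define c where "c k = (RR*t)^k / fact k" for k
  have B: "\<forall>\<xi>. \<bar>\<Sum>\<zeta>\<in>Z. a \<zeta> * h \<zeta> \<xi>\<bar> \<le> (\<Sum>\<zeta>\<in>Z. \<bar>a \<zeta>\<bar>)"
  proof
    fix \<xi>
    have "\<bar>\<Sum>\<zeta>\<in>Z. a \<zeta> * h \<zeta> \<xi>\<bar> \<le> (\<Sum>\<zeta>\<in>Z. \<bar>a \<zeta> * h \<zeta> \<xi>\<bar>)" by (rule sum_abs)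
    also have "\<dots> \<le> (\<Sum>\<zeta>\<in>Z. \<bar>a \<zeta>\<bar>)"
    proof (rule sum_mono)
      fix \<zeta> assume "\<zeta> \<in> Z"
      then have "\<bar>h \<zeta> \<xi>\<bar> \<le> 1" using hb by blast
      then show "\<bar>a \<zeta> * h \<zeta> \<xi>\<bar> \<le> \<bar>a \<zeta>\<bar>" by (simp add: abs_mult mult_left_le)
    qed
    finally show "\<bar>\<Sum>\<zeta>\<in>Z. a \<zeta> * h \<zeta> \<xi>\<bar> \<le> (\<Sum>\<zeta>\<in>Z. \<bar>a \<zeta>\<bar>)" .
  qed
  have sm: "summable (\<lambda>k. c k * (Pop^^k) (h \<zeta>) \<eta>)" if "\<zeta> \<in> Z" for \<zeta>
    unfolding c_def using Pk_summable hb that by blast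
  have "semigroup N rp rm t (\<lambda>\<xi>. \<Sum>\<zeta>\<in>Z. a \<zeta> * h \<zeta> \<xi>) \<eta> = exp (-(RR*t)) * (\<Sum>k. c k * (\<Sum>\<zeta>\<in>Z. a \<zeta> * (Pop^^k) (h \<zeta>) \<eta>))"
    unfolding semi_rep[OF B] c_def Pk_lin[OF Z] ..
  also have "(\<Sum>k. c k * (\<Sum>\<zeta>\<in>Z. a \<zeta> * (Pop^^k) (h \<zeta>) \<eta>)) = (\<Sum>k. \<Sum>\<zeta>\<in>Z. a \<zeta> * (c k * (Pop^^k) (h \<zeta>) \<eta>))"
    by (simp add: sum_distrib_left mult_ac)
  also have "\<dots> = (\<Sum>\<zeta>\<in>Z. \<Sum>k. a \<zeta> * (c k * (Pop^^k) (h \<zeta>) \<eta>))"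
    using sm by (intro suminf_sum summable_mult) auto
  also have "\<dots> = (\<Sum>\<zeta>\<in>Z. a \<zeta> * (\<Sum>k. c k * (Pop^^k) (h \<zeta>) \<eta>))"
    using sm by (intro sum.cong refl) (auto simp: suminf_mult)
  also have "exp (-(RR*t)) * (\<Sum>\<zeta>\<in>Z. a \<zeta> * (\<Sum>k. c k * (Pop^^k) (h \<zeta>) \<eta>)) = (\<Sum>\<zeta>\<in>Z. a \<zeta> * semigroup N rp rm t (h \<zeta>) \<eta>)"
    unfolding sum_distrib_left
  proof (rule sum.cong[OF refl])
    fix \<zeta> assume "\<zeta> \<in> Z"
    then have b1: "\<forall>\<xi>. \<bar>h \<zeta> \<xi>\<bar> \<le> 1" using hb by blast
    show "exp (-(RR*t)) * (a \<zeta> * (\<Sum>k. c k * (Pop^^k) (h \<zeta>) \<eta>)) = a \<zeta> * semigroup N rp rm t (h \<zeta>) \<eta>"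
      unfolding semi_rep[OF b1] c_def by (simp add: mult_ac)
  qed
  finally show ?thesis .
qed

lemma law_lin:
  assumes sb: "\<forall>\<zeta>. \<bar>s \<zeta>\<bar> \<le> 1"
  shows "(\<Sum>\<zeta>\<in>CN. s \<zeta> * law N rp rm \<nu> t \<zeta>) = (\<Sum>\<eta>\<in>CN. \<nu> \<eta> * semigroup N rp rm t (\<lambda>\<xi>. \<Sum>\<zeta>\<in>CN. s \<zeta> * ind \<zeta> \<xi>) \<eta>)"
proof -
  have "(\<Sum>\<zeta>\<in>CN. s \<zeta> * law N rp rm \<nu> t \<zeta>) = (\<Sum>\<zeta>\<in>CN. \<Sum>\<eta>\<in>CN. \<nu> \<eta> * (s \<zeta> * semigroup N rp rm t (ind \<zeta>) \<eta>))"
    unfolding law_def ind_eq by (simp add: sum_distrib_left mult_ac)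
  also have "\<dots> = (\<Sum>\<eta>\<in>CN. \<nu> \<eta> * (\<Sum>\<zeta>\<in>CN. s \<zeta> * semigroup N rp rm t (ind \<zeta>) \<eta>))"
    by (subst sum.swap) (simp add: sum_distrib_left)
  also have "\<dots> = (\<Sum>\<eta>\<in>CN. \<nu> \<eta> * semigroup N rp rm t (\<lambda>\<xi>. \<Sum>\<zeta>\<in>CN. s \<zeta> * ind \<zeta> \<xi>) \<eta>)"
    using semi_lin[OF finite_configs, where h=ind and a=s and t=t] ind_bound by simp
  finally show ?thesis .
qed

lemma main_bound:
  assumes mu: "prob_on N \<mu>" and pi: "prob_on N \<pi>" and st: "\<forall>\<zeta>\<in>CN. law N rp rm \<pi> t \<zeta> = \<pi> \<zeta>" and t: "0 \<le> t"
  shows "tvnorm N (\<lambda>\<eta>. law N rp rm \<mu> t \<eta> - \<pi> \<eta>) \<le> min 2 (2 * AA * exp (- t / AA))"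
proof -
  define s where "s \<zeta> = sgn (law N rp rm \<mu> t \<zeta> - \<pi> \<zeta>)" for \<zeta>
  define g where "g \<xi> = (\<Sum>\<zeta>\<in>CN. s \<zeta> * ind \<zeta> \<xi>)" for \<xi>
  define G where "G = semigroup N rp rm t g"
  define M where "M = min 2 (2 * AA * exp (- t / AA))"
  have sb: "\<forall>\<zeta>. \<bar>s \<zeta>\<bar> \<le> 1" unfolding s_def by (simp add: abs_sgn_eq)
  have gb: "\<forall>\<xi>. \<bar>g \<xi>\<bar> \<le> 1"
  proof
    fix \<xi>
    have e: "(\<lambda>\<zeta>. s \<zeta> * ind \<zeta> \<xi>) = (\<lambda>\<zeta>. if \<zeta> = \<xi> then s \<xi> else 0)" by (auto simp: ind_def)
    show "\<bar>g \<xi>\<bar> \<le> 1" unfolding g_def e using finite_configs sb by simp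
  qed
  have Gd: "\<bar>G \<eta> - G \<xi>\<bar> \<le> M" if "\<eta> \<in> CN" "\<xi> \<in> CN" for \<eta> \<xi>
  proof -
    have "\<bar>G \<eta>\<bar> \<le> 1" "\<bar>G \<xi>\<bar> \<le> 1" unfolding G_def using semi_abs[OF gb t] by auto
    then have "\<bar>G \<eta> - G \<xi>\<bar> \<le> 2" by linarith
    moreover have "\<bar>G \<eta> - G \<xi>\<bar> \<le> 2 * AA * exp (- t / AA)" unfolding G_def using semi_osc[OF gb t that] .
    ultimately show ?thesis unfolding M_def by simp
  qed
  have mu1: "(\<Sum>\<eta>\<in>CN. \<mu> \<eta>) = 1" and mu0: "\<And>\<eta>. \<eta> \<in> CN \<Longrightarrow> 0 \<le> \<mu> \<eta>" using mu unfolding prob_on_def by auto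
  have pi1: "(\<Sum>\<eta>\<in>CN. \<pi> \<eta>) = 1" and pi0: "\<And>\<eta>. \<eta> \<in> CN \<Longrightarrow> 0 \<le> \<pi> \<eta>" using pi unfolding prob_on_def by auto
  have "tvnorm N (\<lambda>\<eta>. law N rp rm \<mu> t \<eta> - \<pi> \<eta>) = (\<Sum>\<zeta>\<in>CN. s \<zeta> * (law N rp rm \<mu> t \<zeta> - \<pi> \<zeta>))"
    unfolding tvnorm_def s_def by (intro sum.cong refl) (simp add: abs_sgn mult.commute)
  also have "\<dots> = (\<Sum>\<zeta>\<in>CN. s \<zeta> * law N rp rm \<mu> t \<zeta>) - (\<Sum>\<zeta>\<in>CN. s \<zeta> * law N rp rm \<pi> t \<zeta>)"
    using st by (simp add: sum_subtractf[symmetric] right_diff_distrib)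
  also have "\<dots> = (\<Sum>\<eta>\<in>CN. \<mu> \<eta> * G \<eta>) - (\<Sum>\<xi>\<in>CN. \<pi> \<xi> * G \<xi>)"
    unfolding law_lin[OF sb] G_def g_def ..
  also have "\<dots> = (\<Sum>\<eta>\<in>CN. \<Sum>\<xi>\<in>CN. \<mu> \<eta> * \<pi> \<xi> * (G \<eta> - G \<xi>))"
  proof -
    have "(\<Sum>\<eta>\<in>CN. \<mu> \<eta> * G \<eta>) = (\<Sum>\<eta>\<in>CN. \<Sum>\<xi>\<in>CN. \<mu> \<eta> * \<pi> \<xi> * G \<eta>)"
      by (simp add: sum_distrib_left[symmetric] sum_distrib_right[symmetric] pi1 mult.commute mult.left_commute)
    moreover have "(\<Sum>\<xi>\<in>CN. \<pi> \<xi> * G \<xi>) = (\<Sum>\<eta>\<in>CN. \<Sum>\<xi>\<in>CN. \<mu> \<eta> * \<pi> \<xi> * G \<xi>)"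
      by (subst sum.swap) (simp add: sum_distrib_left[symmetric] sum_distrib_right[symmetric] mu1 mult.commute mult.left_commute)
    ultimately show ?thesis by (simp add: sum_subtractf[symmetric] right_diff_distrib)
  qed
  also have "\<dots> \<le> (\<Sum>\<eta>\<in>CN. \<Sum>\<xi>\<in>CN. \<mu> \<eta> * \<pi> \<xi> * M)"
  proof (intro sum_mono)
    fix \<eta> \<xi> assume "\<eta> \<in> CN" "\<xi> \<in> CN"
    then have "G \<eta> - G \<xi> \<le> M" "0 \<le> \<mu> \<eta> * \<pi> \<xi>" using Gd mu0 pi0 by (auto simp: abs_le_iff)
    then show "\<mu> \<eta> * \<pi> \<xi> * (G \<eta> - G \<xi>) \<le> \<mu> \<eta> * \<pi> \<xi> * M" by (rule mult_left_mono)
  qed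
  also have "\<dots> = M"
    by (simp add: sum_distrib_left[symmetric] sum_distrib_right[symmetric] mu1 pi1)
  finally show ?thesis unfolding M_def .
qed

lemma stat_eq: "stat N rp rm = pist"
  unfolding stat_def
proof (rule the_equality)
  show "prob_on N pist \<and> (\<forall>t\<ge>0. \<forall>\<zeta>\<in>CN. law N rp rm pist t \<zeta> = pist \<zeta>)"
    using pist_prob pist_stat by auto
next
  fix \<mu> assume a: "prob_on N \<mu> \<and> (\<forall>t\<ge>0. \<forall>\<zeta>\<in>CN. law N rp rm \<mu> t \<zeta> = \<mu> \<zeta>)"
  let ?T = "tvnorm N (\<lambda>\<eta>. \<mu> \<eta> - pist \<eta>)"
  have bnd: "?T \<le> 2 * AA * exp (-1) ^ n" for n
  proof -
    define t where "t = real n * AA"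
    have t0: "0 \<le> t" unfolding t_def using AA_pos by simp
    have "?T = tvnorm N (\<lambda>\<eta>. law N rp rm \<mu> t \<eta> - pist \<eta>)"
      unfolding tvnorm_def using a t0 by (intro sum.cong refl) auto
    also have "\<dots> \<le> min 2 (2 * AA * exp (- t / AA))"
      using a pist_prob pist_stat t0 by (intro main_bound) auto
    also have "\<dots> \<le> 2 * AA * exp (- t / AA)" by simp
    also have "exp (- t / AA) = exp (-1) ^ n" unfolding t_def using AA_pos by (simp add: exp_of_nat_mult[symmetric])
    finally show ?thesis .
  qed
  have "(\<lambda>n. 2 * AA * exp (-1) ^ n) \<longlonglongrightarrow> 2 * AA * 0"
    by (intro tendsto_mult_left LIMSEQ_realpow_zero) auto
  then have "?T \<le> 0" using bnd by (intro tendsto_le[OF trivial_limit_sequentially]) (auto intro: tendsto_const)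
  moreover have "0 \<le> ?T" unfolding tvnorm_def by (simp add: sum_nonneg)
  ultimately have "?T = 0" by simp
  then have z: "\<forall>\<eta>\<in>CN. \<bar>\<mu> \<eta> - pist \<eta>\<bar> = 0" unfolding tvnorm_def using finite_configs
    by (subst (asm) sum_nonneg_eq_0_iff) auto
  show "\<mu> = pist"
  proof
    fix \<eta> show "\<mu> \<eta> = pist \<eta>"
    proof (cases "\<eta> \<in> CN")
      case True then show ?thesis using z by simp
    next
      case False then show ?thesis using a pist_prob unfolding prob_on_def by simp
    qed
  qed
qed

lemma final_arith:
  assumes t: "0 < t"
  shows "min 2 (2 * AA * exp (- t / AA)) \<le> 8 * real N * exp (- (1/8) * t / (real N)^2)"
proof -
  define n where "n = real N"
  define u where "u = exp (- (1/8) * t / n^2)"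
  have n1: "1 \<le> n" unfolding n_def using Npos by simp
  have u0: "0 < u" unfolding u_def by simp
  have nn: "1 * n \<le> n * n" using n1 by (intro mult_right_mono) auto
  have AAn: "AA \<le> 4 * n^2" unfolding AA_def n_def using nn n_def by (simp add: power2_eq_square algebra_simps) (use nn n1 in linarith)
  have "t / (4 * n^2) \<le> t / AA" using AAn AA_pos t n1 by (intro divide_left_mono) auto
  then have "- t / AA \<le> 2 * (- (1/8) * t / n^2)" by (simp add: field_simps)
  then have e: "exp (- t / AA) \<le> u^2" unfolding u_def by (simp add: exp_of_nat_mult[symmetric])
  show ?thesis
  proof (cases "1 \<le> n * u")
    case True
    have "min 2 (2 * AA * exp (- t / AA)) \<le> 2" by simp
    also have "\<dots> \<le> 8 * (n * u)" using True by simp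
    finally show ?thesis unfolding u_def n_def by (simp add: mult.assoc)
  next
    case False
    have "min 2 (2 * AA * exp (- t / AA)) \<le> 2 * AA * exp (- t / AA)" by simp
    also have "\<dots> \<le> 2 * (4 * n^2) * u^2" using AAn e AA_pos by (intro mult_mono) auto
    also have "\<dots> = 8 * n * u * (n * u)" by (simp add: power2_eq_square)
    also have "\<dots> \<le> 8 * n * u * 1" using False n1 u0 by (intro mult_left_mono) auto
    finally show ?thesis unfolding u_def n_def by simp
  qed
qed

lemma final_bound:
  assumes "0 < t" "prob_on N \<mu>"
  shows "tvnorm N (\<lambda>\<eta>. law N rp rm \<mu> t \<eta> - stat N rp rm \<eta>) \<le> 8 * real N * exp (- (1/8) * t / (real N)^2)"
proof -
  have "tvnorm N (\<lambda>\<eta>. law N rp rm \<mu> t \<eta> - pist \<eta>) \<le> min 2 (2 * AA * exp (- t / AA))"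
    using assms(1) pist_stat by (intro main_bound[OF assms(2) pist_prob]) auto
  also have "\<dots> \<le> 8 * real N * exp (- (1/8) * t / (real N)^2)" by (rule final_arith[OF assms(1)])
  finally show ?thesis unfolding stat_eq .
qed

end

theorem theorem2p1:
  fixes rp rm :: real
  assumes "rp \<le> 1" and "rm < rp" and "0 \<le> rm"
  shows "\<exists>c b::real. b > 0 \<and>
    (\<forall>N::nat. N > 0 \<longrightarrow> (\<forall>\<mu>. prob_on N \<mu> \<longrightarrow> (\<forall>t::real. t > 0 \<longrightarrow>
       tvnorm N (\<lambda>\<eta>. law N rp rm \<mu> t \<eta> - stat N rp rm \<eta>)
         \<le> c * real N * exp (- b * t / (real N)\<^sup>2))))"
proof (rule exI[of _ 8], rule exI[of _ "1/8"], intro conjI allI impI)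
  fix N :: nat and \<mu> and t :: real
  assume "N > 0" "prob_on N \<mu>" "t > 0"
  then show "tvnorm N (\<lambda>\<eta>. law N rp rm \<mu> t \<eta> - stat N rp rm \<eta>) \<le> 8 * real N * exp (- (1/8) * t / (real N)\<^sup>2)"
    using final_bound[OF \<open>N > 0\<close> assms] by simp
qed simp

end
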